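(* Under Assumptions 1, 2, 3 and 4 (stated in the context), for every node $i\in[n]$, $$\mu_i:=\liminf_{t\to\infty}-\frac1t\log\big(1-q_i^{(t)}(\theta_M)\big)=\min_{k\in[M-1]}K(\theta_M,\theta_k)\quad\mathsf P\text{-a.s.}$$
   Context: There are $n$ nodes and a finite set of hypotheses $\Theta=\{\theta_1,\dots,\theta_M\}$. Node $i$ has an observation space $\mathcal{X}_i$; $\mathcal{X}=\mathcal{X}_1\times\cdots\times\mathcal{X}_n$. For each $k\in[M]$, $f(\cdot;\theta_k)$ is a joint probability distribution on $\mathcal{X}$ with $i$-th marginal $f_i(\cdot;\theta_k)$. The true hypothesis is $\theta_M$: the observation profiles $X^{(t)}=(X_1^{(t)},\dots,X_n^{(t)})$, $t=1,2,\dots$, are i.i.d. over $t$ with law $f(\cdot;\theta_M)$ (components may be dependent). $\mathsf{P}$ is the induced probability measure; $D(\cdot\|\cdot)$ is KL divergence. $W$ is an $n\times n$ row-stochastic nonnegative matrix with, for $j\ne i$, $W_{ij}>0$ iff there is a directed edge from $j$ to $i$ in the communication graph. Learning rule: initial private beliefs $\mathbf q_i^{(0)}$ (probability vectors on $\Theta$); for $t\ge1$, $k\in[M]$: $b_i^{(t)}(\theta_k)=\frac{f_i(X_i^{(t)};\theta_k)q_i^{(t-1)}(\theta_k)}{\sum_{a}f_i(X_i^{(t)};\theta_a)q_i^{(t-1)}(\theta_a)}$ and $q_i^{(t)}(\theta_k)=\frac{\exp(\sum_j W_{ij}\log b_j^{(t)}(\theta_k))}{\sum_a\exp(\sum_j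 W_{ij}\log b_j^{(t)}(\theta_a))}$. Assumption 1: for every $k\ne j$ there is a node $i$ with $D(f_i(\cdot;\theta_k)\|f_i(\cdot;\theta_j))>0$. Assumption 2: the communication graph is strongly connected ($W$ irreducible). Assumption 3: $q_i^{(0)}(\theta_k)>0$ for all $i,k$. Assumption 4: there is $L>0$ with $\max_{i}\max_{j,k\in[M]}\sup_{x\in\mathcal X_i}\big|\log\frac{f_i(x;\theta_j)}{f_i(x;\theta_k)}\big|\le L$. $\mathbf v$ is the stationary distribution of $W$ and $K(\theta_M,\theta_k)=\sum_{i=1}^n v_iD(f_i(\cdot;\theta_M)\|f_i(\cdot;\theta_k))$. *)

theory Defs
  imports "HOL-Probability.Probability"
begin

text \<open>Nodes are 1..n, hypotheses are 1..M (the true one is M).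
  W i j is the weight node i puts on node j; f i k x is the likelihood
  (density w.r.t. a reference measure) of observation x at node i under hypothesis k.
  obs t j is the observation of node j at time t (t \<ge> 1).\<close>

fun belief :: "(nat \<Rightarrow> nat \<Rightarrow> real) \<Rightarrow> nat \<Rightarrow> nat \<Rightarrow> (nat \<Rightarrow> nat \<Rightarrow> 'x \<Rightarrow> real)
    \<Rightarrow> (nat \<Rightarrow> nat \<Rightarrow> real) \<Rightarrow> (nat \<Rightarrow> nat \<Rightarrow> 'x) \<Rightarrow> nat \<Rightarrow> nat \<Rightarrow> nat \<Rightarrow> real" where
  "belief W n M f q0 obs 0 i k = q0 i k"
| "belief W n M f q0 obs (Suc t) i k =
    (let b = (\<lambda>j a. f j a (obs (Suc t) j) * belief W n M f q0 obs t j a /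
                     (\<Sum>c\<in>{1..M}. f j c (obs (Suc t) j) * belief W n M f q0 obs t j c))
     in exp (\<Sum>j\<in>{1..n}. W i j * ln (b j k)) /
        (\<Sum>a\<in>{1..M}. exp (\<Sum>j\<in>{1..n}. W i j * ln (b j a))))"


definition comm_edges :: "(nat \<Rightarrow> nat \<Rightarrow> real) \<Rightarrow> nat \<Rightarrow> (nat \<times> nat) set" where
  "comm_edges W n = {(j, i). i \<in> {1..n} \<and> j \<in> {1..n} \<and> i \<noteq> j \<and> W i j > 0}"

definition strongly_connected :: "(nat \<Rightarrow> nat \<Rightarrow> real) \<Rightarrow> nat \<Rightarrow> bool" where
  "strongly_connected W n \<longleftrightarrow> (\<forall>i\<in>{1..n}. \<forall>j\<in>{1..n}. (i, j) \<in> (comm_edges W n)\<^sup>*)"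

text \<open>KL divergence D(f_i(.;theta_a) || f_i(.;theta_b)) in nats, with densities w.r.t. lam i.\<close>
definition KLnode :: "(nat \<Rightarrow> 'x measure) \<Rightarrow> (nat \<Rightarrow> nat \<Rightarrow> 'x \<Rightarrow> real) \<Rightarrow> nat \<Rightarrow> nat \<Rightarrow> nat \<Rightarrow> real" where
  "KLnode lam f i a b =
     KL_divergence (exp 1) (density (lam i) (\<lambda>x. ennreal (f i b x))) (density (lam i) (\<lambda>x. ennreal (f i a x)))"

end

theory Submission
  imports Defs
begin


fun Wp :: "(nat \<Rightarrow> nat \<Rightarrow> real) \<Rightarrow> nat \<Rightarrow> nat \<Rightarrow> nat \<Rightarrow> nat \<Rightarrow> real" where
  "Wp W n 0 i j = (if i = j then 1 else 0)"
| "Wp W n (Suc m) i j = (\<Sum>l\<in>{1..n}. W i l * Wp W n m l j)"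

locale stoch =
  fixes W :: "nat \<Rightarrow> nat \<Rightarrow> real" and n :: nat
  assumes W_nonneg: "\<And>i j. i \<in> {1..n} \<Longrightarrow> j \<in> {1..n} \<Longrightarrow> W i j \<ge> 0"
    and W_stoch: "\<And>i. i \<in> {1..n} \<Longrightarrow> (\<Sum>j\<in>{1..n}. W i j) = 1"
begin

lemma Wp_nonneg: "i \<in> {1..n} \<Longrightarrow> Wp W n m i j \<ge> 0"
proof (induction m arbitrary: i)
  case 0 then show ?case by simp
next
  case (Suc m) then show ?case by (auto intro!: sum_nonneg mult_nonneg_nonneg W_nonneg)
qed

lemma Wp_rowsum: "i \<in> {1..n} \<Longrightarrow> (\<Sum>j\<in>{1..n}. Wp W n m i j) = 1"
proof (induction m arbitrary: i)
  case 0 then show ?case by simp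
next
  case (Suc m)
  have "(\<Sum>j\<in>{1..n}. Wp W n (Suc m) i j) = (\<Sum>l\<in>{1..n}. W i l * (\<Sum>j\<in>{1..n}. Wp W n m l j))"
    by (simp add: sum_distrib_left) (rule sum.swap)
  also have "\<dots> = (\<Sum>l\<in>{1..n}. W i l)" using Suc by (intro sum.cong) auto
  finally show ?case using W_stoch Suc by simp
qed

lemma Wp_le1: "i \<in> {1..n} \<Longrightarrow> j \<in> {1..n} \<Longrightarrow> Wp W n m i j \<le> 1"
proof -
  assume i: "i \<in> {1..n}" and j: "j \<in> {1..n}"
  have "Wp W n m i j \<le> (\<Sum>j\<in>{1..n}. Wp W n m i j)"
    by (rule member_le_sum) (use i j Wp_nonneg in auto)
  then show ?thesis using Wp_rowsum[OF i] by simp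
qed

lemma Wp_add: "i \<in> {1..n} \<Longrightarrow> Wp W n (p + q) i j = (\<Sum>l\<in>{1..n}. Wp W n p i l * Wp W n q l j)"
proof (induction p arbitrary: i)
  case 0
  have "(\<Sum>l\<in>{1..n}. Wp W n 0 i l * Wp W n q l j) = (\<Sum>l\<in>{1..n}. if l = i then Wp W n q i j else 0)"
    by (intro sum.cong) auto
  also have "\<dots> = Wp W n q i j" using 0 by (simp add: sum.delta')
  finally show ?case by simp
next
  case (Suc p)
  have "Wp W n (Suc p + q) i j = (\<Sum>l\<in>{1..n}. W i l * (\<Sum>r\<in>{1..n}. Wp W n p l r * Wp W n q r j))"
    using Suc.IH by (auto intro!: sum.cong)
  also have "\<dots> = (\<Sum>r\<in>{1..n}. (\<Sum>l\<in>{1..n}. W i l * Wp W n p l r) * Wp W n q r j)"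
    by (simp add: sum_distrib_left sum_distrib_right mult.assoc) (rule sum.swap)
  finally show ?case by simp
qed

lemma Wp_Suc_right: "i \<in> {1..n} \<Longrightarrow> j \<in> {1..n} \<Longrightarrow>
   Wp W n (Suc m) i j = (\<Sum>l\<in>{1..n}. Wp W n m i l * W l j)"
proof -
  assume i: "i \<in> {1..n}" and j: "j \<in> {1..n}"
  have 1: "Wp W n 1 l j = W l j" for l
  proof -
    have "Wp W n 1 l j = (\<Sum>r\<in>{1..n}. W l r * Wp W n 0 r j)"
      by (simp only: One_nat_def Wp.simps(2))
    also have "\<dots> = (\<Sum>r\<in>{1..n}. if r = j then W l j else 0)"
      by (intro sum.cong) auto
    also have "\<dots> = W l j" using j by (simp add: sum.delta')
    finally show ?thesis .
  qed
  have "Wp W n (Suc m) i j = Wp W n (m+1) i j" by simp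
  also have "\<dots> = (\<Sum>l\<in>{1..n}. Wp W n m i l * Wp W n 1 l j)" by (rule Wp_add[OF i])
  also have "\<dots> = (\<Sum>l\<in>{1..n}. Wp W n m i l * W l j)" by (simp only: 1)
  finally show ?thesis .
qed

lemma v_Wp:
  assumes v_stat: "\<And>j. j \<in> {1..n} \<Longrightarrow> (\<Sum>i\<in>{1..n}. v i * W i j) = v j"
  shows "j \<in> {1..n} \<Longrightarrow> (\<Sum>i\<in>{1..n}. v i * Wp W n m i j) = v j"
proof (induction m arbitrary: j)
  case 0
  have "(\<Sum>i\<in>{1..n}. v i * Wp W n 0 i j) = (\<Sum>i\<in>{1..n}. if i = j then v j else 0)"
    by (intro sum.cong) auto
  then show ?case using 0 by (simp add: sum.delta')
next
  case (Suc m)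
  have "(\<Sum>i\<in>{1..n}. v i * Wp W n (Suc m) i j) = (\<Sum>i\<in>{1..n}. v i * (\<Sum>l\<in>{1..n}. Wp W n m i l * W l j))"
    apply (intro sum.cong refl)
    subgoal for i using Wp_Suc_right[of i j m] Suc.prems by simp
    done
  also have "\<dots> = (\<Sum>l\<in>{1..n}. (\<Sum>i\<in>{1..n}. v i * Wp W n m i l) * W l j)"
    by (simp add: sum_distrib_left sum_distrib_right mult.assoc) (rule sum.swap)
  also have "\<dots> = (\<Sum>l\<in>{1..n}. v l * W l j)" using Suc.IH by (intro sum.cong) auto
  finally show ?case using v_stat Suc by simp
qed

end


context stoch begin

lemma Wp_pos_path:
  assumes "(a, b) \<in> (comm_edges W n)\<^sup>*" "a \<in> {1..n}"
  shows "\<exists>p. Wp W n p b a > 0"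
  using assms(1)
proof (induction rule: rtrancl_induct)
  case base then show ?case by (intro exI[of _ 0]) simp
next
  case (step y z)
  from step.hyps(2) have yz: "y \<in> {1..n}" "z \<in> {1..n}" "W z y > 0"
    by (auto simp: comm_edges_def)
  from step.IH obtain p where p: "Wp W n p y a > 0" by blast
  have "W z y * Wp W n p y a \<le> (\<Sum>l\<in>{1..n}. W z l * Wp W n p l a)"
    by (rule member_le_sum[where f = "\<lambda>l. W z l * Wp W n p l a"])
       (use yz in \<open>auto intro!: mult_nonneg_nonneg W_nonneg Wp_nonneg\<close>)
  moreover have "W z y * Wp W n p y a > 0" using yz p by simp
  ultimately show ?case by (intro exI[of _ "Suc p"]) simp
qed

lemma Wp_pos_exists:
  assumes sc: "strongly_connected W n" and i: "i \<in> {1..n}" and j: "j \<in> {1..n}"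
  shows "\<exists>p. Wp W n p i j > 0"
  using sc i j unfolding strongly_connected_def by (intro Wp_pos_path) auto

lemma S_pos:
  assumes sc: "strongly_connected W n"
  shows "\<exists>N \<beta>. \<beta> > 0 \<and> (\<forall>i\<in>{1..n}. \<forall>j\<in>{1..n}. (\<Sum>p\<le>N. Wp W n p i j) \<ge> \<beta>)"
proof -
  define P where "P = (\<lambda>ij. SOME p. Wp W n p (fst ij) (snd ij) > 0)"
  have P: "Wp W n (P (i,j)) i j > 0" if "i \<in> {1..n}" "j \<in> {1..n}" for i j
    unfolding P_def using someI_ex[OF Wp_pos_exists[OF sc that]] by simp
  define N where "N = Max (P ` ({1..n} \<times> {1..n}))"
  define S where "S = (\<lambda>ij. (\<Sum>p\<le>N. Wp W n p (fst ij) (snd ij)))"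
  have S_ge: "S (i,j) \<ge> Wp W n (P (i,j)) i j" if ij: "i \<in> {1..n}" "j \<in> {1..n}" for i j
  proof -
    have "P (i,j) \<le> N" unfolding N_def using ij by (intro Max_ge) auto
    then show ?thesis unfolding S_def fst_conv snd_conv
      by (intro member_le_sum[where f = "\<lambda>p. Wp W n p i j"]) (use ij Wp_nonneg in auto)
  qed
  have ne: "{1..n} \<times> {1..n} \<noteq> {}" if "\<exists>i. i \<in> {1..n}" using that by auto
  show ?thesis
  proof (cases "n = 0")
    case True then show ?thesis by (intro exI[of _ 0] exI[of _ 1]) auto
  next
    case False
    define \<beta> where "\<beta> = Min (S ` ({1..n} \<times> {1..n}))"
    have "\<beta> \<in> S ` ({1..n} \<times> {1..n})" unfolding \<beta>_def using False by (intro Min_in) auto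
    then obtain i j where ij: "i \<in> {1..n}" "j \<in> {1..n}" "\<beta> = S (i,j)" by auto
    have "\<beta> > 0" using ij S_ge[OF ij(1,2)] P[OF ij(1,2)] by simp
    moreover have "\<forall>i\<in>{1..n}. \<forall>j\<in>{1..n}. (\<Sum>p\<le>N. Wp W n p i j) \<ge> \<beta>"
    proof (intro ballI)
      fix i j assume "i \<in> {1..n}" "j \<in> {1..n}"
      then have "\<beta> \<le> S (i,j)" unfolding \<beta>_def by (intro Min_le) auto
      then show "(\<Sum>p\<le>N. Wp W n p i j) \<ge> \<beta>" by (simp add: S_def)
    qed
    ultimately show ?thesis by blast
  qed
qed

lemma cesaro:
  assumes sc: "strongly_connected W n"
    and v_nonneg: "\<And>i. i \<in> {1..n} \<Longrightarrow> v i \<ge> 0"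
    and v_sum: "(\<Sum>i\<in>{1..n}. v i) = 1"
    and v_stat: "\<And>j. j \<in> {1..n} \<Longrightarrow> (\<Sum>i\<in>{1..n}. v i * W i j) = v j"
    and i: "i \<in> {1..n}"
  shows "(\<lambda>t. (1 / real t) * (\<Sum>m\<in>{1..t}. \<Sum>j\<in>{1..n}. Wp W n m i j * mu j))
           \<longlonglongrightarrow> (\<Sum>j\<in>{1..n}. v j * mu j)"
proof -
  define I where "I = {1..n::nat}"
  have finI: "finite I" and neI: "I \<noteq> {}" using i by (auto simp: I_def)
  define x where "x m i = (\<Sum>j\<in>I. Wp W n m i j * mu j)" for m i
  define a where "a t i = (1 / real t) * (\<Sum>m\<in>{1..t}. x m i)" for t i
  define C where "C = (\<Sum>j\<in>I. \<bar>mu j\<bar>)"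
  define c where "c = (\<Sum>j\<in>I. v j * mu j)"
  have C0: "C \<ge> 0" unfolding C_def by (simp add: sum_nonneg)
  have x_bd: "\<bar>x m l\<bar> \<le> C" if l: "l \<in> I" for m l
  proof -
    have "\<bar>x m l\<bar> \<le> (\<Sum>j\<in>I. \<bar>Wp W n m l j * mu j\<bar>)" unfolding x_def by (rule sum_abs)
    also have "\<dots> \<le> C" unfolding C_def
    proof (intro sum_mono)
      fix j assume j: "j \<in> I"
      have "0 \<le> Wp W n m l j" "Wp W n m l j \<le> 1" using l j Wp_nonneg Wp_le1 by (auto simp: I_def)
      then show "\<bar>Wp W n m l j * mu j\<bar> \<le> \<bar>mu j\<bar>"
        by (simp add: abs_mult mult_left_le_one_le)
    qed
    finally show ?thesis .
  qed
  have x_shift: "(\<Sum>l\<in>I. Wp W n p i' l * x m l) = x (p + m) i'" if i': "i' \<in> I" for p m i'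
  proof -
    have "(\<Sum>l\<in>I. Wp W n p i' l * x m l) = (\<Sum>j\<in>I. (\<Sum>l\<in>I. Wp W n p i' l * Wp W n m l j) * mu j)"
      unfolding x_def by (simp add: sum_distrib_left sum_distrib_right mult.assoc) (rule sum.swap)
    also have "\<dots> = x (p + m) i'" unfolding x_def
      using Wp_add[of i' p m] i' by (simp add: I_def)
    finally show ?thesis .
  qed
  have tele: "\<bar>(\<Sum>m\<in>{1..t}. x (p + m) l - x m l)\<bar> \<le> 2 * real p * C" if l: "l \<in> I" for p t l
  proof (induction p)
    case 0 then show ?case by simp
  next
    case (Suc p)
    have "(\<Sum>m\<in>{1..t}. x (Suc p + m) l - x m l) =
          (\<Sum>m\<in>{1..t}. x (p + Suc m) l - x (p + m) l) + (\<Sum>m\<in>{1..t}. x (p + m) l - x m l)"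
      by (simp add: sum.distrib[symmetric])
    also have "(\<Sum>m\<in>{1..t}. x (p + Suc m) l - x (p + m) l) = x (p + Suc t) l - x (p + 1) l"
      using sum_Suc_diff[of 1 t "\<lambda>m. x (p + m) l"] by simp
    finally have "\<bar>(\<Sum>m\<in>{1..t}. x (Suc p + m) l - x m l)\<bar> \<le>
        \<bar>x (p + Suc t) l\<bar> + \<bar>x (p + 1) l\<bar> + \<bar>(\<Sum>m\<in>{1..t}. x (p + m) l - x m l)\<bar>" by linarith
    also have "\<dots> \<le> C + C + 2 * real p * C" using x_bd[OF l] Suc by (intro add_mono) auto
    finally show ?case by (simp add: algebra_simps)
  qed
  have shiftA: "\<bar>(\<Sum>l\<in>I. Wp W n p i' l * a t l) - a t i'\<bar> \<le> 2 * real p * C / real t"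
    if i': "i' \<in> I" and t: "t \<ge> 1" for p t i'
  proof -
    have "(\<Sum>l\<in>I. Wp W n p i' l * a t l) = (1 / real t) * (\<Sum>m\<in>{1..t}. \<Sum>l\<in>I. Wp W n p i' l * x m l)"
      unfolding a_def by (simp add: sum_distrib_left mult.left_commute) (rule sum.swap)
    also have "\<dots> = (1 / real t) * (\<Sum>m\<in>{1..t}. x (p + m) i')" using x_shift[OF i'] by simp
    finally have "(\<Sum>l\<in>I. Wp W n p i' l * a t l) - a t i' = (1 / real t) * (\<Sum>m\<in>{1..t}. x (p + m) i' - x m i')"
      unfolding a_def by (simp add: sum_subtractf right_diff_distrib)
    then have "\<bar>(\<Sum>l\<in>I. Wp W n p i' l * a t l) - a t i'\<bar> = \<bar>(\<Sum>m\<in>{1..t}. x (p + m) i' - x m i')\<bar> / real t"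
      by (simp add: abs_mult)
    also have "\<dots> \<le> 2 * real p * C / real t" using tele[OF i'] t by (intro divide_right_mono) auto
    finally show ?thesis .
  qed
  obtain N \<beta> where \<beta>: "\<beta> > 0" and S_ge: "\<And>i j. i \<in> I \<Longrightarrow> j \<in> I \<Longrightarrow> (\<Sum>p\<le>N. Wp W n p i j) \<ge> \<beta>"
    using S_pos[OF sc] unfolding I_def by blast
  define D where "D = real (N + 1) * (2 * real N * C)"
  have Sdev: "(real N + 1) * a t i' - D / real t \<le> (\<Sum>l\<in>I. (\<Sum>p\<le>N. Wp W n p i' l) * a t l)"
    if i': "i' \<in> I" and t: "t \<ge> 1" for t i'
  proof -
    have "(\<Sum>l\<in>I. (\<Sum>p\<le>N. Wp W n p i' l) * a t l) - (real N + 1) * a t i' =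
          (\<Sum>p\<le>N. (\<Sum>l\<in>I. Wp W n p i' l * a t l) - a t i')"
      by (simp add: sum_distrib_right sum_subtractf) (subst sum.swap, simp add: algebra_simps)
    also have "\<dots> \<ge> - (\<Sum>p\<le>N. 2 * real N * C / real t)"
    proof -
      have "(\<Sum>p\<le>N. (\<Sum>l\<in>I. Wp W n p i' l * a t l) - a t i') \<ge> (\<Sum>p\<le>N. - (2 * real N * C / real t))"
      proof (intro sum_mono)
        fix p assume p: "p \<in> {..N}"
        have "2 * real p * C / real t \<le> 2 * real N * C / real t"
          using p C0 by (intro divide_right_mono mult_right_mono) auto
        then show "- (2 * real N * C / real t) \<le> (\<Sum>l\<in>I. Wp W n p i' l * a t l) - a t i'"
          using shiftA[OF i' t, of p] by linarith
      qed
      then show ?thesis by (simp add: sum_negf)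
    qed
    finally show ?thesis by (simp add: D_def)
  qed
  have rowS: "(\<Sum>l\<in>I. (\<Sum>p\<le>N. Wp W n p i' l)) = real N + 1" if i': "i' \<in> I" for i'
  proof -
    have "(\<Sum>l\<in>I. (\<Sum>p\<le>N. Wp W n p i' l)) = (\<Sum>p\<le>N. (\<Sum>l\<in>I. Wp W n p i' l))" by (rule sum.swap)
    also have "\<dots> = (\<Sum>p\<le>N. 1)" using Wp_rowsum i' by (simp add: I_def)
    finally show ?thesis by simp
  qed
  have conv: "(\<Sum>l\<in>I. v l * a t l) = c" if t: "t \<ge> 1" for t
  proof -
    have inner: "(\<Sum>l\<in>I. v l * x m l) = (\<Sum>j\<in>I. (\<Sum>l\<in>I. v l * Wp W n m l j) * mu j)" for m
    proof -
      have "(\<Sum>l\<in>I. v l * x m l) = (\<Sum>l\<in>I. \<Sum>j\<in>I. v l * Wp W n m l j * mu j)"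
        unfolding x_def by (intro sum.cong refl) (simp add: sum_distrib_left mult.assoc)
      also have "\<dots> = (\<Sum>j\<in>I. \<Sum>l\<in>I. v l * Wp W n m l j * mu j)" by (rule sum.swap)
      also have "\<dots> = (\<Sum>j\<in>I. (\<Sum>l\<in>I. v l * Wp W n m l j) * mu j)"
        by (intro sum.cong refl) (simp add: sum_distrib_right)
      finally show ?thesis .
    qed
    have "(\<Sum>l\<in>I. v l * a t l) = (\<Sum>l\<in>I. (1 / real t) * (\<Sum>m\<in>{1..t}. v l * x m l))"
      unfolding a_def by (intro sum.cong refl) (simp add: sum_distrib_left)
    also have "\<dots> = (1 / real t) * (\<Sum>l\<in>I. \<Sum>m\<in>{1..t}. v l * x m l)"
      by (simp add: sum_distrib_left)
    also have "\<dots> = (1 / real t) * (\<Sum>m\<in>{1..t}. \<Sum>l\<in>I. v l * x m l)"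
      by (subst sum.swap) (rule refl)
    also have "\<dots> = (1 / real t) * (\<Sum>m\<in>{1..t}. \<Sum>j\<in>I. (\<Sum>l\<in>I. v l * Wp W n m l j) * mu j)"
      by (simp only: inner)
    also have "\<dots> = (1 / real t) * (\<Sum>m\<in>{1..t}. c)" unfolding c_def
      using v_Wp[OF v_stat] by (simp add: I_def)
    finally show ?thesis using t by simp
  qed
  have main: "\<bar>a t i - c\<bar> \<le> (D / \<beta>) / real t" if t: "t \<ge> 1" for t
  proof -
    define Mx where "Mx = Max (a t ` I)"
    define mn where "mn = Min (a t ` I)"
    have "Mx \<in> a t ` I" unfolding Mx_def using finI neI by (intro Max_in) auto
    then obtain i0 where i0: "i0 \<in> I" "a t i0 = Mx" by auto
    have "mn \<in> a t ` I" unfolding mn_def using finI neI by (intro Min_in) auto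
    then obtain l0 where l0: "l0 \<in> I" "a t l0 = mn" by auto
    have le_Mx: "a t l \<le> Mx" if "l \<in> I" for l unfolding Mx_def using finI that by auto
    have ge_mn: "a t l \<ge> mn" if "l \<in> I" for l unfolding mn_def using finI that by auto
    define Sr where "Sr l = (\<Sum>p\<le>N. Wp W n p i0 l)" for l
    have Sr_nn: "Sr l \<ge> 0" if "l \<in> I" for l
      unfolding Sr_def using Wp_nonneg i0 by (auto simp: I_def intro!: sum_nonneg)
    have "(\<Sum>l\<in>I. Sr l * a t l) = (\<Sum>l\<in>I. Sr l) * Mx - (\<Sum>l\<in>I. Sr l * (Mx - a t l))"
      by (simp add: sum_distrib_right sum_subtractf right_diff_distrib)
    also have "(\<Sum>l\<in>I. Sr l * (Mx - a t l)) \<ge> Sr l0 * (Mx - a t l0)"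
      by (rule member_le_sum[where f = "\<lambda>l. Sr l * (Mx - a t l)"])
         (use l0 finI Sr_nn le_Mx in \<open>auto intro!: mult_nonneg_nonneg\<close>)
    moreover have "Sr l0 * (Mx - a t l0) \<ge> \<beta> * (Mx - mn)"
      using S_ge[OF i0(1) l0(1)] l0 le_Mx[OF l0(1)] unfolding Sr_def by (simp add: mult_right_mono)
    ultimately have A: "(\<Sum>l\<in>I. Sr l * a t l) \<le> (real N + 1) * Mx - \<beta> * (Mx - mn)"
      using rowS[OF i0(1)] by (simp add: Sr_def)
    have B: "(real N + 1) * Mx - D / real t \<le> (\<Sum>l\<in>I. Sr l * a t l)"
      using Sdev[OF i0(1) t] i0 by (simp add: Sr_def)
    have osc: "\<beta> * (Mx - mn) \<le> D / real t" using A B by linarith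
    have "c \<le> Mx"
    proof -
      have "c = (\<Sum>l\<in>I. v l * a t l)" using conv[OF t] by simp
      also have "\<dots> \<le> (\<Sum>l\<in>I. v l * Mx)"
        using v_nonneg le_Mx by (intro sum_mono mult_left_mono) (auto simp: I_def)
      also have "\<dots> = Mx" using v_sum by (simp add: I_def sum_distrib_right[symmetric])
      finally show ?thesis .
    qed
    moreover have "c \<ge> mn"
    proof -
      have "c = (\<Sum>l\<in>I. v l * a t l)" using conv[OF t] by simp
      moreover have "(\<Sum>l\<in>I. v l * a t l) \<ge> (\<Sum>l\<in>I. v l * mn)"
        using v_nonneg ge_mn by (intro sum_mono mult_left_mono) (auto simp: I_def)
      moreover have "(\<Sum>l\<in>I. v l * mn) = mn" using v_sum by (simp add: I_def sum_distrib_right[symmetric])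
      ultimately show ?thesis by simp
    qed
    moreover have "a t i \<le> Mx" "a t i \<ge> mn" using i le_Mx ge_mn by (auto simp: I_def)
    ultimately have "\<bar>a t i - c\<bar> \<le> Mx - mn" by linarith
    also have "\<dots> \<le> (D / real t) / \<beta>" using osc \<beta> by (subst pos_le_divide_eq) (auto simp: mult.commute)
    finally show ?thesis by (simp add: mult.commute)
  qed
  have "(\<lambda>t. a t i - c) \<longlonglongrightarrow> 0"
  proof (rule Lim_null_comparison)
    show "\<forall>\<^sub>F t in sequentially. norm (a t i - c) \<le> (D / \<beta>) / real t"
      using main by (intro eventually_sequentiallyI[of 1]) auto
    show "(\<lambda>t. (D / \<beta>) / real t) \<longlonglongrightarrow> 0" by (rule lim_const_over_n)
  qed
  then have "(\<lambda>t. a t i) \<longlonglongrightarrow> c" by (rule LIM_zero_cancel)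
  then show ?thesis unfolding a_def x_def c_def I_def .
qed

end


context prob_space begin

lemma hoeffding_avg:
  fixes Z :: "nat \<Rightarrow> 'a \<Rightarrow> 'y" and N :: "'y measure" and g :: "nat \<Rightarrow> 'y \<Rightarrow> real"
    and c :: "nat \<Rightarrow> nat \<Rightarrow> nat \<Rightarrow> real" and J :: "nat set"
  assumes indep: "indep_vars (\<lambda>_. N) Z {1..}"
    and finJ: "finite J"
    and g_meas: "\<And>j. j \<in> J \<Longrightarrow> g j \<in> borel_measurable N"
    and g_bd: "\<And>j y. j \<in> J \<Longrightarrow> y \<in> space N \<Longrightarrow> \<bar>g j y\<bar> \<le> B"
    and mean0: "\<And>s j. s \<ge> 1 \<Longrightarrow> j \<in> J \<Longrightarrow> expectation (\<lambda>\<omega>. g j (Z s \<omega>)) = 0"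
    and c_bd: "\<And>t s j. \<bar>c t s j\<bar> \<le> 1"
    and eps: "\<epsilon> > 0"
  shows "AE \<omega> in M. eventually (\<lambda>t. \<bar>(\<Sum>s\<in>{1..t}. \<Sum>j\<in>J. c t s j * g j (Z s \<omega>))\<bar> < \<epsilon> * real t) sequentially"
proof -
  have Zm: "Z s \<in> measurable M N" if "s \<ge> 1" for s
    using indep that unfolding indep_vars_def by auto
  define B' where "B' = real (card J) * \<bar>B\<bar> + 1"
  have B'0: "B' > 0" unfolding B'_def by (intro add_nonneg_pos mult_nonneg_nonneg) auto
  define Y where "Y t s \<omega> = (\<Sum>j\<in>J. c t s j * g j (Z s \<omega>))" for t s \<omega>
  have Ybd: "\<bar>Y t s \<omega>\<bar> \<le> B'" if "s \<ge> 1" "\<omega> \<in> space M" for t s \<omega>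
  proof -
    have Zs: "Z s \<omega> \<in> space N" using Zm[OF that(1)] that(2) by (auto simp: measurable_def)
    have "\<bar>Y t s \<omega>\<bar> \<le> (\<Sum>j\<in>J. \<bar>c t s j * g j (Z s \<omega>)\<bar>)" unfolding Y_def by (rule sum_abs)
    also have "\<dots> \<le> (\<Sum>j\<in>J. \<bar>B\<bar>)"
    proof (intro sum_mono)
      fix j assume j: "j \<in> J"
      have "\<bar>c t s j\<bar> * \<bar>g j (Z s \<omega>)\<bar> \<le> 1 * \<bar>B\<bar>"
        using c_bd g_bd[OF j Zs] by (intro mult_mono) auto
      then show "\<bar>c t s j * g j (Z s \<omega>)\<bar> \<le> \<bar>B\<bar>" by (simp add: abs_mult)
    qed
    also have "\<dots> \<le> B'" unfolding B'_def by simp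
    finally show ?thesis .
  qed
  define a where "a = \<epsilon>\<^sup>2 / (2 * B'\<^sup>2)"
  have a0: "a > 0" unfolding a_def using eps B'0 by simp
  define A where "A t = {\<omega> \<in> space M. \<bar>(\<Sum>s\<in>{1..t}. Y t s \<omega>)\<bar> \<ge> \<epsilon> * real t}" for t
  have Ameas: "A t \<in> sets M" for t
  proof -
    have "(\<lambda>\<omega>. (\<Sum>s\<in>{1..t}. Y t s \<omega>)) \<in> borel_measurable M"
      unfolding Y_def using Zm g_meas by (intro borel_measurable_sum borel_measurable_times) auto
    then show ?thesis unfolding A_def by measurable
  qed
  have Abd: "prob (A t) \<le> 2 * exp (- a * real t)" for t
  proof (cases "t = 0")
    case True then show ?thesis by (simp add: prob_le_1 order_trans[OF prob_le_1])
  next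
    case False
    interpret H: Hoeffding_ineq M "{1..t}" "Y t" "\<lambda>_. - B'" "\<lambda>_. B'" 0
    proof unfold_locales
      show "finite {1..t}" by simp
      show "indep_vars (\<lambda>_. borel) (Y t) {1..t}"
      proof -
        have "indep_vars (\<lambda>_. N) Z {1..t}" by (rule indep_vars_subset[OF indep]) auto
        then have "indep_vars (\<lambda>_. borel) (\<lambda>s \<omega>. (\<lambda>y. \<Sum>j\<in>J. c t s j * g j y) (Z s \<omega>)) {1..t}"
          by (rule indep_vars_compose2) (use g_meas in auto)
        then show ?thesis unfolding Y_def by simp
      qed
      show "AE x in M. Y t i x \<in> {- B'..B'}" if "i \<in> {1..t}" for i
      proof (intro AE_I2)
        fix x assume "x \<in> space M"
        then have "\<bar>Y t i x\<bar> \<le> B'" using Ybd that by auto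
        then show "Y t i x \<in> {- B'..B'}" by (auto simp: abs_le_iff)
      qed
      have "expectation (Y t s) = 0" if s: "s \<in> {1..t}" for s
      proof -
        have int: "integrable M (\<lambda>\<omega>. g j (Z s \<omega>))" if j: "j \<in> J" for j
        proof (rule integrable_const_bound[where B = B])
          show "AE x in M. norm (g j (Z s x)) \<le> B"
            using g_bd[OF j] Zm s by (intro AE_I2) (auto simp: measurable_def)
          show "(\<lambda>x. g j (Z s x)) \<in> borel_measurable M" using g_meas[OF j] Zm s by auto
        qed
        have "expectation (Y t s) = (\<Sum>j\<in>J. c t s j * expectation (\<lambda>\<omega>. g j (Z s \<omega>)))"
          unfolding Y_def using int by (simp add: integral_sum)
        also have "\<dots> = 0" using mean0 s by simp
        finally show ?thesis .
      qed
      then show "0 \<equiv> \<Sum>i\<in>{1..t}. expectation (Y t i)" by simp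
    qed
    have sq: "(\<Sum>i\<in>{1..t}. (B' - - B')\<^sup>2) = real t * (4 * B'\<^sup>2)"
      by (simp add: power2_eq_square)
    have pos: "(\<Sum>i\<in>{1..t}. (B' - - B')\<^sup>2) > 0" unfolding sq using False B'0 by simp
    have "prob {x \<in> space M. \<bar>(\<Sum>i\<in>{1..t}. Y t i x) - 0\<bar> \<ge> \<epsilon> * real t}
            \<le> 2 * exp (-2 * (\<epsilon> * real t)\<^sup>2 / (\<Sum>i\<in>{1..t}. (B' - - B')\<^sup>2))"
      using eps by (intro H.Hoeffding_ineq_abs_ge pos) simp
    also have "-2 * (\<epsilon> * real t)\<^sup>2 / (\<Sum>i\<in>{1..t}. (B' - - B')\<^sup>2) = - a * real t"
      unfolding sq a_def using False B'0 by (simp add: field_simps power2_eq_square)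
    finally show ?thesis unfolding A_def by simp
  qed
  have summ: "summable (\<lambda>t. measure M (A t))"
  proof (rule summable_comparison_test)
    show "\<exists>N. \<forall>n\<ge>N. norm (measure M (A n)) \<le> 2 * exp (- a) ^ n"
      using Abd by (auto simp: exp_of_nat_mult[symmetric] mult.commute)
    show "summable (\<lambda>n. 2 * exp (- a) ^ n)"
      using a0 by (intro summable_mult summable_geometric) simp
  qed
  have "AE \<omega> in M. eventually (\<lambda>t. \<omega> \<in> space M - A t) sequentially"
    by (rule borel_cantelli_AE1[OF Ameas _ summ]) (simp add: emeasure_eq_measure)
  then show ?thesis
    by (rule AE_mp) (intro AE_I2 impI, elim eventually_mono, auto simp: A_def Y_def)
qed

lemma hoeffding_slln:
  fixes Z :: "nat \<Rightarrow> 'a \<Rightarrow> 'y" and N :: "'y measure" and g :: "nat \<Rightarrow> 'y \<Rightarrow> real"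
    and c :: "nat \<Rightarrow> nat \<Rightarrow> nat \<Rightarrow> real" and J :: "nat set"
  assumes indep: "indep_vars (\<lambda>_. N) Z {1..}"
    and finJ: "finite J"
    and g_meas: "\<And>j. j \<in> J \<Longrightarrow> g j \<in> borel_measurable N"
    and g_bd: "\<And>j y. j \<in> J \<Longrightarrow> y \<in> space N \<Longrightarrow> \<bar>g j y\<bar> \<le> B"
    and mean0: "\<And>s j. s \<ge> 1 \<Longrightarrow> j \<in> J \<Longrightarrow> expectation (\<lambda>\<omega>. g j (Z s \<omega>)) = 0"
    and c_bd: "\<And>t s j. \<bar>c t s j\<bar> \<le> 1"
  shows "AE \<omega> in M. (\<lambda>t. (1 / real t) * (\<Sum>s\<in>{1..t}. \<Sum>j\<in>J. c t s j * g j (Z s \<omega>))) \<longlonglongrightarrow> 0"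
proof -
  have "AE \<omega> in M. \<forall>m. eventually (\<lambda>t. \<bar>(\<Sum>s\<in>{1..t}. \<Sum>j\<in>J. c t s j * g j (Z s \<omega>))\<bar> < (1 / real (Suc m)) * real t) sequentially"
    unfolding AE_all_countable
    by (intro allI hoeffding_avg[OF indep finJ g_meas g_bd mean0 c_bd]) auto
  then show ?thesis
  proof (rule AE_mp, intro AE_I2 impI)
    fix \<omega> assume H: "\<forall>m. eventually (\<lambda>t. \<bar>(\<Sum>s\<in>{1..t}. \<Sum>j\<in>J. c t s j * g j (Z s \<omega>))\<bar> < (1 / real (Suc m)) * real t) sequentially"
    show "(\<lambda>t. (1 / real t) * (\<Sum>s\<in>{1..t}. \<Sum>j\<in>J. c t s j * g j (Z s \<omega>))) \<longlonglongrightarrow> 0"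
    proof (rule tendstoI)
      fix e :: real assume e: "e > 0"
      obtain m where m: "inverse (real (Suc m)) < e" using reals_Archimedean[OF e] by blast
      show "eventually (\<lambda>t. dist ((1 / real t) * (\<Sum>s\<in>{1..t}. \<Sum>j\<in>J. c t s j * g j (Z s \<omega>))) 0 < e) sequentially"
        using H[rule_format, of m] eventually_gt_at_top[of 0]
      proof (eventually_elim)
        case (elim t)
        then have "\<bar>(\<Sum>s\<in>{1..t}. \<Sum>j\<in>J. c t s j * g j (Z s \<omega>))\<bar> / real t < 1 / real (Suc m)"
          by (simp add: divide_less_eq)
        moreover have "1 / real (Suc m) < e" using m by (simp add: inverse_eq_divide)
        ultimately show ?case by (simp add: abs_mult dist_real_def)
      qed
    qed
  qed
qed

end


locale beliefs =
  fixes W :: "nat \<Rightarrow> nat \<Rightarrow> real" and n M :: nat and f :: "nat \<Rightarrow> nat \<Rightarrow> 'x \<Rightarrow> real"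
    and q0 :: "nat \<Rightarrow> nat \<Rightarrow> real" and obs :: "nat \<Rightarrow> nat \<Rightarrow> 'x"
  assumes M1: "M \<ge> 1"
    and fpos: "\<And>s j a. s \<ge> 1 \<Longrightarrow> j \<in> {1..n} \<Longrightarrow> a \<in> {1..M} \<Longrightarrow> f j a (obs s j) > 0"
    and q0_pos: "\<And>i k. i \<in> {1..n} \<Longrightarrow> k \<in> {1..M} \<Longrightarrow> q0 i k > 0"
    and q0_sum: "\<And>i. i \<in> {1..n} \<Longrightarrow> (\<Sum>k\<in>{1..M}. q0 i k) = 1"
begin

abbreviation "bel \<equiv> belief W n M f q0 obs"

lemma bel_Suc: "bel (Suc t) i a = exp (\<Sum>j\<in>{1..n}. W i j * ln (f j a (obs (Suc t) j) * bel t j a /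
                     (\<Sum>c\<in>{1..M}. f j c (obs (Suc t) j) * bel t j c))) /
        (\<Sum>a'\<in>{1..M}. exp (\<Sum>j\<in>{1..n}. W i j * ln (f j a' (obs (Suc t) j) * bel t j a' /
                     (\<Sum>c\<in>{1..M}. f j c (obs (Suc t) j) * bel t j c))))"
  by (simp add: Let_def)

lemma bel_pos: "i \<in> {1..n} \<Longrightarrow> a \<in> {1..M} \<Longrightarrow> bel t i a > 0"
proof (cases t)
  case 0 then show "i \<in> {1..n} \<Longrightarrow> a \<in> {1..M} \<Longrightarrow> bel t i a > 0" using q0_pos by simp
next
  case (Suc t')
  have "(\<Sum>a'\<in>{1..M}. exp (\<Sum>j\<in>{1..n}. W i j * ln (f j a' (obs (Suc t') j) * bel t' j a' /
                     (\<Sum>c\<in>{1..M}. f j c (obs (Suc t') j) * bel t' j c)))) > 0"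
    using M1 by (intro sum_pos) auto
  then show ?thesis unfolding Suc bel_Suc by simp
qed

lemma bel_sum: "i \<in> {1..n} \<Longrightarrow> (\<Sum>a\<in>{1..M}. bel t i a) = 1"
proof (cases t)
  case 0 then show "i \<in> {1..n} \<Longrightarrow> (\<Sum>a\<in>{1..M}. bel t i a) = 1" using q0_sum by simp
next
  case (Suc t')
  have "(\<Sum>a'\<in>{1..M}. exp (\<Sum>j\<in>{1..n}. W i j * ln (f j a' (obs (Suc t') j) * bel t' j a' /
                     (\<Sum>c\<in>{1..M}. f j c (obs (Suc t') j) * bel t' j c)))) > 0"
    using M1 by (intro sum_pos) auto
  then show ?thesis unfolding Suc bel_Suc by (simp add: sum_divide_distrib[symmetric])
qed

lemma bel_ratio:
  assumes i: "i \<in> {1..n}" and a: "a \<in> {1..M}" and MM: "M \<in> {1..M}"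
  shows "ln (bel (Suc t) i a / bel (Suc t) i M) =
    (\<Sum>j\<in>{1..n}. W i j * (ln (bel t j a / bel t j M) + ln (f j a (obs (Suc t) j) / f j M (obs (Suc t) j))))"
proof -
  define Z where "Z j = (\<Sum>c\<in>{1..M}. f j c (obs (Suc t) j) * bel t j c)" for j
  define E where "E a' = (\<Sum>j\<in>{1..n}. W i j * ln (f j a' (obs (Suc t) j) * bel t j a' / Z j))" for a'
  define T where "T = (\<Sum>a'\<in>{1..M}. exp (E a'))"
  have T0: "T > 0" unfolding T_def using M1 by (intro sum_pos) auto
  have Z0: "Z j > 0" if "j \<in> {1..n}" for j
    unfolding Z_def using M1 that fpos bel_pos by (intro sum_pos mult_pos_pos) auto
  have "bel (Suc t) i a / bel (Suc t) i M = exp (E a) / exp (E M)"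
    unfolding bel_Suc E_def[symmetric] Z_def[symmetric] T_def[symmetric] using T0 by simp
  then have "ln (bel (Suc t) i a / bel (Suc t) i M) = E a - E M" by (simp add: exp_diff[symmetric])
  also have "\<dots> = (\<Sum>j\<in>{1..n}. W i j * (ln (f j a (obs (Suc t) j) * bel t j a / Z j) -
                                          ln (f j M (obs (Suc t) j) * bel t j M / Z j)))"
    unfolding E_def by (simp add: sum_subtractf right_diff_distrib)
  also have "\<dots> = (\<Sum>j\<in>{1..n}. W i j * (ln (bel t j a / bel t j M) + ln (f j a (obs (Suc t) j) / f j M (obs (Suc t) j))))"
  proof (intro sum.cong refl arg_cong2[where f = "(*)"])
    fix j assume j: "j \<in> {1..n}"
    have p: "f j a (obs (Suc t) j) > 0" "f j M (obs (Suc t) j) > 0" "bel t j a > 0" "bel t j M > 0" "Z j > 0"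
      using fpos[of "Suc t" j] a MM j bel_pos Z0 by auto
    then show "ln (f j a (obs (Suc t) j) * bel t j a / Z j) - ln (f j M (obs (Suc t) j) * bel t j M / Z j) =
               ln (bel t j a / bel t j M) + ln (f j a (obs (Suc t) j) / f j M (obs (Suc t) j))"
      by (simp add: ln_div ln_mult)
  qed
  finally show ?thesis .
qed

end


lemma Wp_sum_swap:
  "(\<Sum>j\<in>{1..n}. Wp W n (Suc m) i j * x j) = (\<Sum>l\<in>{1..n}. W i l * (\<Sum>j\<in>{1..n}. Wp W n m l j * x j))"
proof -
  have "(\<Sum>j\<in>{1..n}. Wp W n (Suc m) i j * x j) = (\<Sum>j\<in>{1..n}. \<Sum>l\<in>{1..n}. W i l * Wp W n m l j * x j)"
    by (simp add: sum_distrib_right)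
  also have "\<dots> = (\<Sum>l\<in>{1..n}. \<Sum>j\<in>{1..n}. W i l * Wp W n m l j * x j)" by (rule sum.swap)
  also have "\<dots> = (\<Sum>l\<in>{1..n}. W i l * (\<Sum>j\<in>{1..n}. Wp W n m l j * x j))"
    by (simp add: sum_distrib_left mult.assoc)
  finally show ?thesis .
qed

lemma Wp_0_sum: "l \<in> {1..n} \<Longrightarrow> (\<Sum>j\<in>{1..n}. Wp W n 0 l j * x j) = x l"
proof -
  assume l: "l \<in> {1..n}"
  have "(\<Sum>j\<in>{1..n}. Wp W n 0 l j * x j) = (\<Sum>j\<in>{1..n}. if l = j then x l else 0)"
    by (intro sum.cong refl) auto
  also have "\<dots> = x l" using l by (simp add: sum.delta)
  finally show ?thesis .
qed

lemma closed_form: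
  fixes \<phi> lam :: "nat \<Rightarrow> nat \<Rightarrow> real"
  assumes rec: "\<And>t i. i \<in> {1..n} \<Longrightarrow> \<phi> (Suc t) i = (\<Sum>j\<in>{1..n}. W i j * (\<phi> t j + lam (Suc t) j))"
  shows "i \<in> {1..n} \<Longrightarrow> \<phi> t i = (\<Sum>j\<in>{1..n}. Wp W n t i j * \<phi> 0 j) +
            (\<Sum>s\<in>{1..t}. \<Sum>j\<in>{1..n}. Wp W n (Suc t - s) i j * lam s j)"
proof (induction t arbitrary: i)
  case 0
  then show ?case using Wp_0_sum[of i n W "\<phi> 0"] by simp
next
  case (Suc t)
  define R where "R t i = (\<Sum>s\<in>{1..t}. \<Sum>j\<in>{1..n}. Wp W n (Suc t - s) i j * lam s j)" for t i
  have "R (Suc t) i = (\<Sum>s\<in>{1..t}. \<Sum>j\<in>{1..n}. Wp W n (Suc (Suc t - s)) i j * lam s j) +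
                      (\<Sum>j\<in>{1..n}. Wp W n (Suc 0) i j * lam (Suc t) j)"
    unfolding R_def by (simp add: Suc_diff_le)
  also have "\<dots> = (\<Sum>s\<in>{1..t}. \<Sum>l\<in>{1..n}. W i l * (\<Sum>j\<in>{1..n}. Wp W n (Suc t - s) l j * lam s j)) +
                  (\<Sum>l\<in>{1..n}. W i l * (\<Sum>j\<in>{1..n}. Wp W n 0 l j * lam (Suc t) j))"
    by (simp only: Wp_sum_swap)
  also have "\<dots> = (\<Sum>l\<in>{1..n}. W i l * R t l) + (\<Sum>l\<in>{1..n}. W i l * lam (Suc t) l)"
  proof -
    have a: "(\<Sum>s\<in>{1..t}. \<Sum>l\<in>{1..n}. W i l * (\<Sum>j\<in>{1..n}. Wp W n (Suc t - s) l j * lam s j)) = (\<Sum>l\<in>{1..n}. W i l * R t l)"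
      unfolding R_def by (simp only: sum_distrib_left) (rule sum.swap)
    have b: "(\<Sum>l\<in>{1..n}. W i l * (\<Sum>j\<in>{1..n}. Wp W n 0 l j * lam (Suc t) j)) = (\<Sum>l\<in>{1..n}. W i l * lam (Suc t) l)"
      by (rule sum.cong[OF refl]) (simp only: Wp_0_sum)
    show ?thesis unfolding a b ..
  qed
  finally have R: "R (Suc t) i = (\<Sum>l\<in>{1..n}. W i l * R t l) + (\<Sum>l\<in>{1..n}. W i l * lam (Suc t) l)" .
  have H: "(\<Sum>j\<in>{1..n}. Wp W n (Suc t) i j * \<phi> 0 j) = (\<Sum>l\<in>{1..n}. W i l * (\<Sum>j\<in>{1..n}. Wp W n t l j * \<phi> 0 j))"
    by (rule Wp_sum_swap)
  have "\<phi> (Suc t) i = (\<Sum>l\<in>{1..n}. W i l * ((\<Sum>j\<in>{1..n}. Wp W n t l j * \<phi> 0 j) + R t l + lam (Suc t) l))"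
  proof -
    have "\<phi> (Suc t) i = (\<Sum>l\<in>{1..n}. W i l * (\<phi> t l + lam (Suc t) l))" by (rule rec[OF Suc.prems])
    also have "\<dots> = (\<Sum>l\<in>{1..n}. W i l * ((\<Sum>j\<in>{1..n}. Wp W n t l j * \<phi> 0 j) + R t l + lam (Suc t) l))"
    proof (rule sum.cong[OF refl])
      fix l assume l: "l \<in> {1..n}"
      show "W i l * (\<phi> t l + lam (Suc t) l) = W i l * ((\<Sum>j\<in>{1..n}. Wp W n t l j * \<phi> 0 j) + R t l + lam (Suc t) l)"
        using Suc.IH[OF l] unfolding R_def by simp
    qed
    finally show ?thesis .
  qed
  also have "\<dots> = (\<Sum>j\<in>{1..n}. Wp W n (Suc t) i j * \<phi> 0 j) + R (Suc t) i"
    unfolding H R by (simp add: distrib_left sum.distrib)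
  finally show ?case unfolding R_def .
qed


lemma rate_lemma:
  fixes \<phi> :: "nat \<Rightarrow> nat \<Rightarrow> real" and K :: "nat \<Rightarrow> real" and A :: "nat set"
  assumes finA: "finite A" and neA: "A \<noteq> {}" and K0: "\<And>a. a \<in> A \<Longrightarrow> K a \<ge> 0"
    and lim: "\<And>a. a \<in> A \<Longrightarrow> (\<lambda>t. \<phi> a t / real t) \<longlonglongrightarrow> - K a"
  shows "(\<lambda>t. (ln (1 + (\<Sum>a\<in>A. exp (\<phi> a t))) - ln (\<Sum>a\<in>A. exp (\<phi> a t))) / real t) \<longlonglongrightarrow> Min (K ` A)"
proof (rule tendstoI)
  fix e :: real assume e: "e > 0"
  define \<epsilon> where "\<epsilon> = e / 4"
  have \<epsilon>: "\<epsilon> > 0" using e by (simp add: \<epsilon>_def)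
  define cA where "cA = real (card A)"
  have cA1: "cA \<ge> 1" using finA neA by (simp add: cA_def Suc_le_eq card_gt_0_iff)
  define Ks where "Ks = Min (K ` A)"
  have "Ks \<in> K ` A" unfolding Ks_def using finA neA by (intro Min_in) auto
  then obtain a0 where a0: "a0 \<in> A" "K a0 = Ks" by auto
  have Ks_le: "Ks \<le> K a" if "a \<in> A" for a unfolding Ks_def using finA that by auto
  have Ks0: "Ks \<ge> 0" using K0 a0 by auto
  have ev1: "eventually (\<lambda>t. \<forall>a\<in>A. dist (\<phi> a t / real t) (- K a) < \<epsilon>) sequentially"
    using finA lim \<epsilon> by (intro eventually_ball_finite) (auto intro: tendstoD)
  obtain T :: nat where T: "real T > ln (1 + cA) / \<epsilon>" using reals_Archimedean2 by blast
  have ev2: "eventually (\<lambda>t. t > T) sequentially" by (rule eventually_gt_at_top)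
  show "eventually (\<lambda>t. dist ((ln (1 + (\<Sum>a\<in>A. exp (\<phi> a t))) - ln (\<Sum>a\<in>A. exp (\<phi> a t))) / real t) (Min (K ` A)) < e) sequentially"
    using ev1 ev2
  proof eventually_elim
    case (elim t)
    define S where "S = (\<Sum>a\<in>A. exp (\<phi> a t))"
    have t0: "real t > 0" using elim(2) by simp
    have ln1: "ln (1 + cA) / real t < \<epsilon>"
    proof -
      have "ln (1 + cA) / \<epsilon> < real t" using T elim(2) by linarith
      then show ?thesis using t0 \<epsilon> by (simp add: divide_less_eq mult.commute)
    qed
    have up: "\<phi> a t < real t * (- Ks + \<epsilon>)" if a: "a \<in> A" for a
    proof -
      have "\<phi> a t / real t < - K a + \<epsilon>" using elim(1) a by (auto simp: dist_real_def)
      then have "\<phi> a t < real t * (- K a + \<epsilon>)" using t0 by (simp add: divide_less_eq mult.commute)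
      also have "\<dots> \<le> real t * (- Ks + \<epsilon>)" using Ks_le[OF a] t0 by (intro mult_left_mono) auto
      finally show ?thesis .
    qed
    have lo: "\<phi> a0 t > real t * (- Ks - \<epsilon>)"
    proof -
      have "\<phi> a0 t / real t > - K a0 - \<epsilon>" using elim(1) a0 by (auto simp: dist_real_def)
      then show ?thesis using t0 a0 by (simp add: less_divide_eq mult.commute)
    qed
    have S_ge: "S \<ge> exp (\<phi> a0 t)" unfolding S_def
      by (rule member_le_sum[where f = "\<lambda>a. exp (\<phi> a t)"]) (use a0 finA in auto)
    have S0: "S > 0" using S_ge by (meson exp_gt_zero less_le_trans)
    have S_le: "S \<le> cA * exp (real t * (- Ks + \<epsilon>))"
    proof -
      have "S \<le> (\<Sum>a\<in>A. exp (real t * (- Ks + \<epsilon>)))" unfolding S_def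
        using up by (intro sum_mono) (auto intro: less_imp_le)
      then show ?thesis by (simp add: cA_def)
    qed
    have S_le2: "S \<le> cA * exp (real t * \<epsilon>)"
    proof -
      have "exp (real t * (- Ks + \<epsilon>)) \<le> exp (real t * \<epsilon>)" using Ks0 t0 by (simp add: mult_left_mono)
      then show ?thesis using S_le cA1 by (meson mult_left_mono order_trans zero_le_one order_trans[OF zero_le_one cA1])
    qed
    have lnS_lo: "ln S > real t * (- Ks - \<epsilon>)"
    proof -
      have "\<phi> a0 t = ln (exp (\<phi> a0 t))" by simp
      also have "\<dots> \<le> ln S" using S_ge S0 by (subst ln_le_cancel_iff) auto
      finally show ?thesis using lo by linarith
    qed
    have lnS_hi: "ln S \<le> ln cA + real t * (- Ks + \<epsilon>)"
    proof -
      have "ln S \<le> ln (cA * exp (real t * (- Ks + \<epsilon>)))" using S_le S0 by simp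
      also have "\<dots> = ln cA + real t * (- Ks + \<epsilon>)" using cA1 by (simp add: ln_mult)
      finally show ?thesis .
    qed
    have ln1S_lo: "ln (1 + S) \<ge> 0" using S0 by simp
    have ln1S_hi: "ln (1 + S) \<le> ln (1 + cA) + real t * \<epsilon>"
    proof -
      have "1 + S \<le> (1 + cA) * exp (real t * \<epsilon>)"
      proof -
        have "1 \<le> exp (real t * \<epsilon>)" using \<epsilon> t0 by simp
        moreover have "(1 + cA) * exp (real t * \<epsilon>) = exp (real t * \<epsilon>) + cA * exp (real t * \<epsilon>)"
          by (simp add: distrib_right)
        ultimately show ?thesis using S_le2 by linarith
      qed
      then have "ln (1 + S) \<le> ln ((1 + cA) * exp (real t * \<epsilon>))" using S0 by simp
      also have "\<dots> = ln (1 + cA) + real t * \<epsilon>" using cA1 by (simp add: ln_mult)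
      finally show ?thesis .
    qed
    have lncA: "ln cA \<le> ln (1 + cA)" using cA1 by simp
    have V: "(ln (1 + S) - ln S) / real t = ln (1 + S) / real t - ln S / real t" by (simp add: diff_divide_distrib)
    have "ln (1 + S) / real t \<le> ln (1 + cA) / real t + \<epsilon>"
    proof -
      have "ln (1 + S) / real t \<le> (ln (1 + cA) + real t * \<epsilon>) / real t"
        using ln1S_hi t0 by (simp add: divide_right_mono)
      also have "\<dots> = ln (1 + cA) / real t + \<epsilon>" using t0 by (simp add: add_divide_distrib)
      finally show ?thesis .
    qed
    moreover have "ln S / real t > - Ks - \<epsilon>" using lnS_lo t0 by (simp add: less_divide_eq mult.commute)
    moreover have "ln S / real t \<le> ln (1 + cA) / real t - Ks + \<epsilon>"
    proof -
      have "ln S \<le> ln (1 + cA) + real t * (- Ks + \<epsilon>)" using lnS_hi lncA by linarith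
      then have "ln S / real t \<le> (ln (1 + cA) + real t * (- Ks + \<epsilon>)) / real t"
        using t0 by (simp add: divide_right_mono)
      also have "\<dots> = ln (1 + cA) / real t - Ks + \<epsilon>" using t0 by (simp add: add_divide_distrib)
      finally show ?thesis .
    qed
    moreover have "ln (1 + S) / real t \<ge> 0" using ln1S_lo t0 by simp
    moreover have "ln (1 + cA) / real t \<ge> 0" using cA1 t0 by simp
    ultimately have "\<bar>(ln (1 + S) - ln S) / real t - Ks\<bar> < 3 * \<epsilon>" using ln1 unfolding V by (simp add: abs_less_iff)
    then show ?case unfolding S_def[symmetric] Ks_def[symmetric] dist_real_def \<epsilon>_def using e by simp
  qed
qed


lemma kl_facts:
  fixes Lm :: "'x measure" and fk fM :: "'x \<Rightarrow> real"
  assumes sf: "sigma_finite_measure Lm"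
    and mk: "fk \<in> borel_measurable Lm" and mM: "fM \<in> borel_measurable Lm"
    and pk: "\<And>x. x \<in> space Lm \<Longrightarrow> fk x > 0" and pM: "\<And>x. x \<in> space Lm \<Longrightarrow> fM x > 0"
    and prk: "prob_space (density Lm (\<lambda>x. ennreal (fk x)))"
    and prM: "prob_space (density Lm (\<lambda>x. ennreal (fM x)))"
    and bd: "\<And>x. x \<in> space Lm \<Longrightarrow> \<bar>ln (fk x / fM x)\<bar> \<le> L"
  shows "integrable (density Lm (\<lambda>x. ennreal (fM x))) (\<lambda>x. ln (fk x / fM x))"
    and "KL_divergence (exp 1) (density Lm (\<lambda>x. ennreal (fk x))) (density Lm (\<lambda>x. ennreal (fM x)))
          = - (\<integral>x. ln (fk x / fM x) \<partial>density Lm (\<lambda>x. ennreal (fM x)))"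
    and "KL_divergence (exp 1) (density Lm (\<lambda>x. ennreal (fk x))) (density Lm (\<lambda>x. ennreal (fM x))) \<ge> 0"
proof -
  interpret sigma_finite_measure Lm by (rule sf)
  interpret D: prob_space "density Lm (\<lambda>x. ennreal (fM x))" by (rule prM)
  have lm: "(\<lambda>x. ln (fk x / fM x)) \<in> borel_measurable Lm" using mk mM by measurable
  show int: "integrable (density Lm (\<lambda>x. ennreal (fM x))) (\<lambda>x. ln (fk x / fM x))"
    by (rule D.integrable_const_bound[where B = L]) (use bd lm in \<open>auto intro!: AE_I2\<close>)
  have int2: "integrable Lm (\<lambda>x. fM x * ln (fk x / fM x))"
    using int lm mM pM by (subst (asm) integrable_density) (auto intro!: AE_I2 less_imp_le)
  have eq: "fM x * log (exp 1) (fM x / fk x) = - (fM x * ln (fk x / fM x))" if "x \<in> space Lm" for x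
    using pk[OF that] pM[OF that] by (simp add: log_def ln_div algebra_simps)
  have "KL_divergence (exp 1) (density Lm (\<lambda>x. ennreal (fk x))) (density Lm (\<lambda>x. ennreal (fM x)))
        = (\<integral>x. fM x * log (exp 1) (fM x / fk x) \<partial>Lm)"
    using mk mM pk pM by (intro KL_density_density) (auto intro!: AE_I2 less_imp_le dest: pk)
  also have "\<dots> = (\<integral>x. - (fM x * ln (fk x / fM x)) \<partial>Lm)" by (rule Bochner_Integration.integral_cong[OF refl eq])
  also have "\<dots> = - (\<integral>x. fM x * ln (fk x / fM x) \<partial>Lm)" by simp
  also have "(\<integral>x. fM x * ln (fk x / fM x) \<partial>Lm) = (\<integral>x. ln (fk x / fM x) \<partial>density Lm (\<lambda>x. ennreal (fM x)))"
    using lm mM pM by (subst integral_density) (auto intro!: AE_I2 less_imp_le)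
  finally show KL: "KL_divergence (exp 1) (density Lm (\<lambda>x. ennreal (fk x))) (density Lm (\<lambda>x. ennreal (fM x)))
          = - (\<integral>x. ln (fk x / fM x) \<partial>density Lm (\<lambda>x. ennreal (fM x)))" .
  have int3: "integrable Lm (\<lambda>x. fM x * log (exp 1) (fM x / fk x))"
  proof -
    have "integrable Lm (\<lambda>x. - (fM x * ln (fk x / fM x)))" using int2 by simp
    moreover have "integrable Lm (\<lambda>x. fM x * log (exp 1) (fM x / fk x)) \<longleftrightarrow> integrable Lm (\<lambda>x. - (fM x * ln (fk x / fM x)))"
      by (rule Bochner_Integration.integrable_cong[OF refl]) (rule eq)
    ultimately show ?thesis by simp
  qed
  show "KL_divergence (exp 1) (density Lm (\<lambda>x. ennreal (fk x))) (density Lm (\<lambda>x. ennreal (fM x))) \<ge> 0"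
    using mk mM pk pM prk prM int3 by (intro KL_density_density_nonneg) (auto intro!: AE_I2 less_imp_le dest: pk)
qed


theorem corollary3:
  fixes P :: "'w measure"
    and lam :: "nat \<Rightarrow> 'x measure"
    and f :: "nat \<Rightarrow> nat \<Rightarrow> 'x \<Rightarrow> real"
    and X :: "nat \<Rightarrow> 'w \<Rightarrow> nat \<Rightarrow> 'x"
    and W :: "nat \<Rightarrow> nat \<Rightarrow> real"
    and q0 :: "nat \<Rightarrow> nat \<Rightarrow> real"
    and v :: "nat \<Rightarrow> real"
    and n M :: nat
  assumes n_pos: "n \<ge> 1" and M_ge2: "M \<ge> 2"
    and P: "prob_space P"
    and lam_sf: "\<And>i. i \<in> {1..n} \<Longrightarrow> sigma_finite_measure (lam i)"
    and f_meas: "\<And>i k. i \<in> {1..n} \<Longrightarrow> k \<in> {1..M} \<Longrightarrow> f i k \<in> borel_measurable (lam i)"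
    and f_pos: "\<And>i k x. i \<in> {1..n} \<Longrightarrow> k \<in> {1..M} \<Longrightarrow> x \<in> space (lam i) \<Longrightarrow> f i k x > 0"
    and f_prob: "\<And>i k. i \<in> {1..n} \<Longrightarrow> k \<in> {1..M} \<Longrightarrow>
                   prob_space (density (lam i) (\<lambda>x. ennreal (f i k x)))"
    and X_meas: "\<And>t i. t \<ge> 1 \<Longrightarrow> i \<in> {1..n} \<Longrightarrow> (\<lambda>\<omega>. X t \<omega> i) \<in> measurable P (lam i)"
    and X_indep: "prob_space.indep_vars P (\<lambda>_. PiM {1..n} lam)
                    (\<lambda>t \<omega>. \<lambda>i\<in>{1..n}. X t \<omega> i) {1..}"
    and X_ident: "\<And>s t. s \<ge> 1 \<Longrightarrow> t \<ge> 1 \<Longrightarrow>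
                    distr P (PiM {1..n} lam) (\<lambda>\<omega>. \<lambda>i\<in>{1..n}. X s \<omega> i)
                  = distr P (PiM {1..n} lam) (\<lambda>\<omega>. \<lambda>i\<in>{1..n}. X t \<omega> i)"
    and X_marg: "\<And>t i. t \<ge> 1 \<Longrightarrow> i \<in> {1..n} \<Longrightarrow>
                    distr P (lam i) (\<lambda>\<omega>. X t \<omega> i) = density (lam i) (\<lambda>x. ennreal (f i M x))"
    and W_nonneg: "\<And>i j. i \<in> {1..n} \<Longrightarrow> j \<in> {1..n} \<Longrightarrow> W i j \<ge> 0"
    and W_stoch: "\<And>i. i \<in> {1..n} \<Longrightarrow> (\<Sum>j\<in>{1..n}. W i j) = 1"
    and q0_pos: "\<And>i k. i \<in> {1..n} \<Longrightarrow> k \<in> {1..M} \<Longrightarrow> q0 i k > 0"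
    and q0_sum: "\<And>i. i \<in> {1..n} \<Longrightarrow> (\<Sum>k\<in>{1..M}. q0 i k) = 1"
    and v_nonneg: "\<And>i. i \<in> {1..n} \<Longrightarrow> v i \<ge> 0"
    and v_sum: "(\<Sum>i\<in>{1..n}. v i) = 1"
    and v_stat: "\<And>j. j \<in> {1..n} \<Longrightarrow> (\<Sum>i\<in>{1..n}. v i * W i j) = v j"
    and A1: "\<And>k j. k \<in> {1..M} \<Longrightarrow> j \<in> {1..M} \<Longrightarrow> k \<noteq> j \<Longrightarrow>
               \<exists>i\<in>{1..n}. KLnode lam f i k j > 0"
    and A2: "strongly_connected W n"
    and A4: "\<exists>L>0. \<forall>i\<in>{1..n}. \<forall>j\<in>{1..M}. \<forall>k\<in>{1..M}. \<forall>x\<in>space (lam i).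
               \<bar>ln (f i j x / f i k x)\<bar> \<le> L"
  shows "\<forall>i\<in>{1..n}. AE \<omega> in P.
           liminf (\<lambda>t. ereal (- (1 / real t) * ln (1 - belief W n M f q0 (\<lambda>s. X s \<omega>) t i M)))
           = ereal (Min ((\<lambda>k. \<Sum>j\<in>{1..n}. v j * KLnode lam f j M k) ` {1..M-1}))"
proof (intro ballI)
  fix i assume i: "i \<in> {1..n}"
  interpret P: prob_space P by (rule P)
  interpret st: stoch W n using W_nonneg W_stoch by unfold_locales
  obtain L where L: "L > 0" and Lbd: "\<And>j a b x. j \<in> {1..n} \<Longrightarrow> a \<in> {1..M} \<Longrightarrow> b \<in> {1..M} \<Longrightarrow> x \<in> space (lam j) \<Longrightarrow>
      \<bar>ln (f j a x / f j b x)\<bar> \<le> L"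
    using A4 by blast
  define A where "A = {1..M-1}"
  have MM: "M \<in> {1..M}" using M_ge2 by simp
  have A_sub: "a \<in> {1..M}" "a \<noteq> M" if "a \<in> A" for a using that M_ge2 by (auto simp: A_def)
  have finA: "finite A" and neA: "A \<noteq> {}" using M_ge2 by (auto simp: A_def)
  have insA: "{1..M} = insert M A" "M \<notin> A" using M_ge2 by (auto simp: A_def)
  define lr where "lr j k x = ln (f j k x / f j M x)" for j k x
  define mu where "mu j k = (\<integral>x. lr j k x \<partial>density (lam j) (\<lambda>x. ennreal (f j M x)))" for j k
  define Kk where "Kk k = (\<Sum>j\<in>{1..n}. v j * KLnode lam f j M k)" for k
  have lr_meas: "lr j k \<in> borel_measurable (lam j)" if "j \<in> {1..n}" "k \<in> {1..M}" for j k
    unfolding lr_def using f_meas[OF that] f_meas[OF that(1) MM] by measurable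
  have KL: "KLnode lam f j M k = - mu j k" "KLnode lam f j M k \<ge> 0"
    "integrable (density (lam j) (\<lambda>x. ennreal (f j M x))) (lr j k)"
    if j: "j \<in> {1..n}" and k: "k \<in> {1..M}" for j k
    using kl_facts[OF lam_sf[OF j] f_meas[OF j k] f_meas[OF j MM] f_pos[OF j k] f_pos[OF j MM]
        f_prob[OF j k] f_prob[OF j MM] Lbd[OF j k MM]]
    unfolding KLnode_def mu_def lr_def by auto
  have Kk0: "Kk k \<ge> 0" if "k \<in> {1..M}" for k
    unfolding Kk_def using v_nonneg KL(2)[OF _ that] by (auto intro!: sum_nonneg mult_nonneg_nonneg)
  have Xsp: "X s \<omega> j \<in> space (lam j)" if "s \<ge> 1" "j \<in> {1..n}" "\<omega> \<in> space P" for s \<omega> j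
    using measurable_space[OF X_meas[OF that(1,2)] that(3)] .
  have lrX_int: "integrable P (\<lambda>\<omega>. lr j k (X s \<omega> j))" if "s \<ge> 1" "j \<in> {1..n}" "k \<in> {1..M}" for s j k
  proof (rule P.integrable_const_bound[where B = L])
    show "AE x in P. norm (lr j k (X s x j)) \<le> L"
      using Lbd[OF that(2,3) MM] Xsp[OF that(1,2)] by (auto simp: lr_def intro!: AE_I2)
    show "(\<lambda>x. lr j k (X s x j)) \<in> borel_measurable P"
      using lr_meas[OF that(2,3)] X_meas[OF that(1,2)] by measurable
  qed
  have lrX_exp: "P.expectation (\<lambda>\<omega>. lr j k (X s \<omega> j)) = mu j k" if "s \<ge> 1" "j \<in> {1..n}" "k \<in> {1..M}" for s j k
  proof -
    have "P.expectation (\<lambda>\<omega>. lr j k (X s \<omega> j)) = (\<integral>x. lr j k x \<partial>distr P (lam j) (\<lambda>\<omega>. X s \<omega> j))"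
      using lr_meas[OF that(2,3)] X_meas[OF that(1,2)] by (subst integral_distr) auto
    also have "\<dots> = mu j k" unfolding X_marg[OF that(1,2)] mu_def ..
    finally show ?thesis .
  qed
  have per_k: "AE \<omega> in P. (\<lambda>t. ln (belief W n M f q0 (\<lambda>s. X s \<omega>) t i k / belief W n M f q0 (\<lambda>s. X s \<omega>) t i M) / real t)
                  \<longlonglongrightarrow> - Kk k" if kA: "k \<in> A" for k
  proof -
    have k: "k \<in> {1..M}" using A_sub[OF kA] by simp
    define Z where "Z = (\<lambda>t \<omega>. \<lambda>i\<in>{1..n}. X t \<omega> i)"
    define g where "g j y = lr j k (y j) - mu j k" for j and y :: "nat \<Rightarrow> 'x"
    define c where "c t s j = (if j \<in> {1..n} then Wp W n (Suc t - s) i j else 0)" for t s j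
    define B where "B = L + (\<Sum>j\<in>{1..n}. \<bar>mu j k\<bar>)"
    have slln: "AE \<omega> in P. (\<lambda>t. (1 / real t) * (\<Sum>s\<in>{1..t}. \<Sum>j\<in>{1..n}. c t s j * g j (Z s \<omega>))) \<longlonglongrightarrow> 0"
    proof (rule P.hoeffding_slln[where B = B and g = g and Z = Z and c = c and J = "{1..n}" and N = "PiM {1..n} lam"])
      show "P.indep_vars (\<lambda>_. PiM {1..n} lam) Z {1..}" using X_indep unfolding Z_def .
      show "finite {1..n}" by simp
      show "g j \<in> borel_measurable (PiM {1..n} lam)" if "j \<in> {1..n}" for j
      proof -
        have "(\<lambda>y. y j) \<in> measurable (PiM {1..n} lam) (lam j)" by (rule measurable_component_singleton[OF that])
        then have "(\<lambda>y. lr j k (y j)) \<in> borel_measurable (PiM {1..n} lam)"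
          using lr_meas[OF that k] by (rule measurable_compose)
        then show ?thesis unfolding g_def by measurable
      qed
      show "\<bar>g j y\<bar> \<le> B" if "j \<in> {1..n}" "y \<in> space (PiM {1..n} lam)" for j y
      proof -
        have "y j \<in> space (lam j)" using that by (auto simp: space_PiM PiE_iff)
        then have "\<bar>lr j k (y j)\<bar> \<le> L" using Lbd[OF that(1) k MM] by (simp add: lr_def)
        moreover have "\<bar>mu j k\<bar> \<le> (\<Sum>j\<in>{1..n}. \<bar>mu j k\<bar>)"
          by (rule member_le_sum[where f = "\<lambda>j. \<bar>mu j k\<bar>"]) (use that in auto)
        ultimately show ?thesis unfolding g_def B_def by linarith
      qed
      show "P.expectation (\<lambda>\<omega>. g j (Z s \<omega>)) = 0" if "s \<ge> 1" "j \<in> {1..n}" for s j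
      proof -
        have "P.expectation (\<lambda>\<omega>. g j (Z s \<omega>)) = P.expectation (\<lambda>\<omega>. lr j k (X s \<omega> j) - mu j k)"
          unfolding g_def Z_def using that by simp
        also have "\<dots> = P.expectation (\<lambda>\<omega>. lr j k (X s \<omega> j)) - mu j k"
          using lrX_int[OF that k] by (simp add: P.prob_space)
        finally show ?thesis using lrX_exp[OF that k] by simp
      qed
      show "\<bar>c t s j\<bar> \<le> 1" for t s j
        unfolding c_def using st.Wp_nonneg[OF i] st.Wp_le1[OF i] by auto
    qed
    define C0 where "C0 = (\<Sum>j\<in>{1..n}. \<bar>ln (q0 j k / q0 j M)\<bar>)"
    define H0 where "H0 t = (\<Sum>j\<in>{1..n}. Wp W n t i j * ln (q0 j k / q0 j M))" for t
    define D where "D t = (\<Sum>m\<in>{1..t}. \<Sum>j\<in>{1..n}. Wp W n m i j * mu j k)" for t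
    have H0lim: "(\<lambda>t. (1 / real t) * H0 t) \<longlonglongrightarrow> 0"
    proof (rule Lim_null_comparison)
      show "\<forall>\<^sub>F t in sequentially. norm ((1 / real t) * H0 t) \<le> C0 / real t"
      proof (intro always_eventually allI)
        fix t
        have "\<bar>H0 t\<bar> \<le> (\<Sum>j\<in>{1..n}. \<bar>Wp W n t i j * ln (q0 j k / q0 j M)\<bar>)" unfolding H0_def by (rule sum_abs)
        also have "\<dots> \<le> C0" unfolding C0_def
        proof (intro sum_mono)
          fix j assume j: "j \<in> {1..n}"
          have "\<bar>Wp W n t i j\<bar> \<le> 1" using st.Wp_nonneg[OF i] st.Wp_le1[OF i j] by auto
          then show "\<bar>Wp W n t i j * ln (q0 j k / q0 j M)\<bar> \<le> \<bar>ln (q0 j k / q0 j M)\<bar>"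
            by (simp add: abs_mult mult_left_le_one_le)
        qed
        finally show "norm ((1 / real t) * H0 t) \<le> C0 / real t"
          by (simp add: abs_mult divide_right_mono)
      qed
      show "(\<lambda>t. C0 / real t) \<longlonglongrightarrow> 0" by (rule lim_const_over_n)
    qed
    have Dlim: "(\<lambda>t. (1 / real t) * D t) \<longlonglongrightarrow> - Kk k"
    proof -
      have "(\<lambda>t. (1 / real t) * D t) \<longlonglongrightarrow> (\<Sum>j\<in>{1..n}. v j * mu j k)"
        unfolding D_def by (rule st.cesaro[OF A2 v_nonneg v_sum v_stat i])
      moreover have "(\<Sum>j\<in>{1..n}. v j * mu j k) = - Kk k"
        unfolding Kk_def using KL(1)[OF _ k] by (simp add: sum_negf[symmetric])
      ultimately show ?thesis by simp
    qed
    show ?thesis using slln AE_space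
    proof (eventually_elim)
      case (elim \<omega>)
      interpret bl: beliefs W n M f q0 "\<lambda>s. X s \<omega>"
        using M_ge2 q0_pos q0_sum f_pos Xsp[OF _ _ elim(2)] by unfold_locales auto
      define \<phi> where "\<phi> t l = ln (bl.bel t l k / bl.bel t l M)" for t l
      define lam' where "lam' s j = lr j k (X s \<omega> j)" for s j
      have rec: "\<phi> (Suc t) l = (\<Sum>j\<in>{1..n}. W l j * (\<phi> t j + lam' (Suc t) j))" if "l \<in> {1..n}" for t l
        unfolding \<phi>_def lam'_def lr_def by (rule bl.bel_ratio[OF that k MM])
      have cf: "\<phi> t i = H0 t + D t + (\<Sum>s\<in>{1..t}. \<Sum>j\<in>{1..n}. c t s j * g j (Z s \<omega>))" for t
      proof -
        have "\<phi> t i = (\<Sum>j\<in>{1..n}. Wp W n t i j * \<phi> 0 j) +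
            (\<Sum>s\<in>{1..t}. \<Sum>j\<in>{1..n}. Wp W n (Suc t - s) i j * lam' s j)"
          by (rule closed_form[where \<phi> = \<phi> and lam = lam' and W = W and n = n, OF rec i])
        also have "(\<Sum>j\<in>{1..n}. Wp W n t i j * \<phi> 0 j) = H0 t" unfolding H0_def \<phi>_def by simp
        also have "(\<Sum>s\<in>{1..t}. \<Sum>j\<in>{1..n}. Wp W n (Suc t - s) i j * lam' s j) =
             (\<Sum>s\<in>{1..t}. \<Sum>j\<in>{1..n}. Wp W n (Suc t - s) i j * mu j k) +
             (\<Sum>s\<in>{1..t}. \<Sum>j\<in>{1..n}. c t s j * g j (Z s \<omega>))"
          unfolding sum.distrib[symmetric]
          by (intro sum.cong refl) (auto simp: c_def g_def Z_def lam'_def algebra_simps)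
        also have "(\<Sum>s\<in>{1..t}. \<Sum>j\<in>{1..n}. Wp W n (Suc t - s) i j * mu j k) = D t"
        proof -
          have "(\<Sum>s\<in>{1..t}. \<Sum>j\<in>{1..n}. Wp W n (Suc t - s) i j * mu j k) =
                (\<Sum>s\<in>{1..t}. \<Sum>j\<in>{1..n}. Wp W n (Suc t - (t + 1 - s)) i j * mu j k)"
            by (rule sum.atLeastAtMost_rev)
          also have "\<dots> = D t" unfolding D_def by (intro sum.cong refl) (auto simp: Suc_diff_le)
          finally show ?thesis .
        qed
        finally show ?thesis by simp
      qed
      have "(\<lambda>t. (1 / real t) * H0 t + (1 / real t) * D t + (1 / real t) * (\<Sum>s\<in>{1..t}. \<Sum>j\<in>{1..n}. c t s j * g j (Z s \<omega>)))
             \<longlonglongrightarrow> 0 + - Kk k + 0"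
        by (intro tendsto_add H0lim Dlim elim(1))
      moreover have "\<phi> t i / real t = (1 / real t) * H0 t + (1 / real t) * D t + (1 / real t) * (\<Sum>s\<in>{1..t}. \<Sum>j\<in>{1..n}. c t s j * g j (Z s \<omega>))" for t
        unfolding cf by (simp add: divide_inverse algebra_simps)
      ultimately show ?case unfolding \<phi>_def by simp
    qed
  qed
  have allk: "AE \<omega> in P. \<forall>k\<in>A. (\<lambda>t. ln (belief W n M f q0 (\<lambda>s. X s \<omega>) t i k / belief W n M f q0 (\<lambda>s. X s \<omega>) t i M) / real t)
                  \<longlonglongrightarrow> - Kk k"
    using finA per_k by (intro eventually_ball_finite) auto
  show "AE \<omega> in P.
           liminf (\<lambda>t. ereal (- (1 / real t) * ln (1 - belief W n M f q0 (\<lambda>s. X s \<omega>) t i M)))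
           = ereal (Min ((\<lambda>k. \<Sum>j\<in>{1..n}. v j * KLnode lam f j M k) ` {1..M-1}))"
    using allk AE_space
  proof (eventually_elim)
    case (elim \<omega>)
    interpret bl: beliefs W n M f q0 "\<lambda>s. X s \<omega>"
      using M_ge2 q0_pos q0_sum f_pos Xsp[OF _ _ elim(2)] by unfold_locales auto
    define \<phi> where "\<phi> a t = ln (bl.bel t i a / bl.bel t i M)" for a t
    have lim: "(\<lambda>t. (ln (1 + (\<Sum>a\<in>A. exp (\<phi> a t))) - ln (\<Sum>a\<in>A. exp (\<phi> a t))) / real t) \<longlonglongrightarrow> Min (Kk ` A)"
      using finA neA Kk0 A_sub elim(1) unfolding \<phi>_def by (intro rate_lemma) auto
    have eq: "(ln (1 + (\<Sum>a\<in>A. exp (\<phi> a t))) - ln (\<Sum>a\<in>A. exp (\<phi> a t))) / real t =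
              - (1 / real t) * ln (1 - bl.bel t i M)" for t
    proof -
      define qM where "qM = bl.bel t i M"
      define S where "S = (\<Sum>a\<in>A. bl.bel t i a)"
      have qM0: "qM > 0" unfolding qM_def using bl.bel_pos[OF i MM] .
      have S0: "S > 0" unfolding S_def using finA neA A_sub bl.bel_pos[OF i] by (intro sum_pos) auto
      have sum1: "qM + S = 1" using bl.bel_sum[OF i, of t] finA insA unfolding qM_def S_def by simp
      have ex: "(\<Sum>a\<in>A. exp (\<phi> a t)) = S / qM"
        unfolding \<phi>_def S_def qM_def sum_divide_distrib
        using A_sub bl.bel_pos[OF i] bl.bel_pos[OF i MM] by (intro sum.cong refl) auto
      have "1 + S / qM = 1 / qM" using sum1 qM0 by (simp add: field_simps)
      then have "ln (1 + S / qM) - ln (S / qM) = ln (1 / qM) - ln (S / qM)" by simp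
      also have "\<dots> = - ln S" using qM0 S0 by (simp add: ln_div)
      finally have key0: "ln (1 + S / qM) - ln (S / qM) = - ln S" .
      have S_eq: "S = 1 - qM" using sum1 by simp
      have key: "ln (1 + S / qM) - ln (S / qM) = - ln (1 - qM)" using key0 unfolding S_eq[symmetric] .
      show ?thesis unfolding ex qM_def[symmetric] key by (simp add: divide_inverse)
    qed
    have "(\<lambda>t. - (1 / real t) * ln (1 - bl.bel t i M)) \<longlonglongrightarrow> Min (Kk ` A)"
      using lim unfolding eq .
    then have "(\<lambda>t. ereal (- (1 / real t) * ln (1 - bl.bel t i M))) \<longlonglongrightarrow> ereal (Min (Kk ` A))"
      by (rule tendsto_ereal)
    then have "liminf (\<lambda>t. ereal (- (1 / real t) * ln (1 - bl.bel t i M))) = ereal (Min (Kk ` A))"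
      by (intro lim_imp_Liminf) auto
    then show ?case unfolding Kk_def A_def .
  qed
qed


end
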